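(* Let $\mathcal A=(Q,\Sigma,\delta,\rho)$ be a connected bireversible Mealy automaton whose labeled orbit tree $\mathfrak t(\mathcal A)$ has no active self-liftable branch, and let $\mathfrak j$ be a jungle tree. For all stems $\mathbf u,\mathbf v$ of $\mathfrak j$, if $\mathbf u\wedge\mathbf v$ then $\mathbf u\sim\mathbf v$.
   Context: Mealy automata. A Mealy automaton is $\mathcal A=(Q,\Sigma,\delta,\rho)$ with $Q,\Sigma$ finite non-empty sets, $\delta=(\delta_i\colon Q\to Q)_{i\in\Sigma}$, $\rho=(\rho_x\colon\Sigma\to\Sigma)_{x\in Q}$; transitions $x\xrightarrow{i\mid\rho_x(i)}\delta_i(x)$. Invertible: each $\rho_x$ a permutation of $\Sigma$; reversible: each $\delta_i$ a permutation of $Q$; bireversible: invertible, reversible, and for each $j\in\Sigma$ the map $x\mapsto\delta_{\rho_x^{-1}(j)}(x)$ is a permutation of $Q$. Connected: the directed graph on $Q$ with edges $x\to\delta_i(x)$ is connected. Extensions: $\rho_x(i\mathbf s)=\rho_x(i)\rho_{\delta_i(x)}(\mathbf s)$; $\rho_{x_1\cdots x_m}=\rho_{x_m}\circ\cdots\circ\rho_{x_1}$; $\delta_i(x\mathbf u)=\delta_i(x)\delta_{\rho_x(i)}(\mathbf u)$ on $Q^*$, $\delta_{i_1\cdots i_m}=\delta_{i_m}\circ\cdots\circ\delta_{i_1}$. The connected components of $\mathcal A^n$ (stateset $Q^n$, transitions $\mathbf u\xrightarrow{i\mid\rho_{\mathbf u}(i)}\delta_i(\mathbf u)$) are, for reversible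 $\mathcal A$, the orbits of $Q^n$ under the maps $\delta_{\mathbf s}$. Orbit tree $\mathfrak t(\mathcal A)$: vertices at level $n\ge0$ are the connected components of $\mathcal A^n$; an edge from the component of $\mathbf u\in Q^n$ to that of $\mathbf ux$ for all $\mathbf u,x$; edge $C\to D$ labeled $\#D/\#C$. $\top,\bot$ = first/last vertex of a downward path; level of an edge/path = level of its top vertex. A word of $Q^*\cup Q^\omega$ represents the initial path through the components of its prefixes. Edge $e$ is liftable to $f$ if every word of $\bot(e)$ has a suffix in $\bot(f)$; paths are liftable if corresponding edges are. $f$ is a legitimate child of $e$ if $\top(f)=\bot(e)$ and $f$ is liftable to $e$. A path/subtree $\mathfrak s$ is $k$-self-liftable if for all $i\ge0$ every path in $\mathfrak s$ starting at level $i+k$ is liftable to a path in $\mathfrak s$ starting at level $i$; self-liftable if $k$-self-liftable for some $k>0$. A branch (infinite initial path) is active if its labels are not eventually all $1$. Jungle trees: for a finite 1-self-liftable initial path $\mathbf e$ of length $n$ whose last edge has at least two legitimate children, all labeled $1$, $\mathfrak j(\mathbf e)$ consists of $\mathbf e$ plus all edges descending from $\bot(\mathbf e)$ that are liftable to the last edge of $\mathbf e$. Stems: the words of $\bot(\mathbf e)\subseteq Q^n$. A $\mathfrak j$-word is a word representing an initial path of $\mathfrak j$. For stems $\mathbf u,\mathbf v$: $\mathbf u\sim\mathbf v$ iff there is $\mathbf s\in Q^*$ such that $\mathbf{usv}$ is a $\mathfrak j$-word and $\rho_{\mathbf{us}}$ is the identity of $\Sigma^*$. Write $\mathbf u\wedge_0\mathbf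 v$ if there is a stem $\mathbf s$ such that both $\mathbf{su}$ and $\mathbf{sv}$ are $\mathfrak j$-words; $\wedge$ is the transitive closure of $\wedge_0$. *)

theory Defs
  imports Complex_Main
begin

text \<open>Mealy automaton with finite nonempty state type 'q (Q = UNIV) and
alphabet type 'a (Sigma = UNIV).  The transition functions are
d i x = delta_i(x) and the output functions are r x i = rho_x(i).\<close>

definition invertible :: "('q::finite \<Rightarrow> 'a::finite \<Rightarrow> 'a) \<Rightarrow> bool" where
  "invertible r \<longleftrightarrow> (\<forall>x. bij (r x))"

definition reversible :: "('a::finite \<Rightarrow> 'q::finite \<Rightarrow> 'q) \<Rightarrow> bool" where
  "reversible d \<longleftrightarrow> (\<forall>i. bij (d i))"

definition bireversible ::
  "('a::finite \<Rightarrow> 'q::finite \<Rightarrow> 'q) \<Rightarrow> ('q \<Rightarrow> 'a \<Rightarrow> 'a) \<Rightarrow> bool" where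
  "bireversible d r \<longleftrightarrow> invertible r \<and> reversible d \<and>
     (\<forall>j. bij (\<lambda>x. d (inv (r x) j) x))"

definition aut_connected :: "('a::finite \<Rightarrow> 'q::finite \<Rightarrow> 'q) \<Rightarrow> bool" where
  "aut_connected d \<longleftrightarrow>
     (let E = {(x, d i x) | x i. True} in \<forall>x y. (x, y) \<in> (E \<union> E\<inverse>)\<^sup>*)"

text \<open>Extensions: rho_x on Sigma^*, rho on Q^*, delta_i on Q^*.\<close>

fun rho1 :: "('a \<Rightarrow> 'q \<Rightarrow> 'q) \<Rightarrow> ('q \<Rightarrow> 'a \<Rightarrow> 'a) \<Rightarrow> 'q \<Rightarrow> 'a list \<Rightarrow> 'a list" where
  "rho1 d r x [] = []"
| "rho1 d r x (i # s) = r x i # rho1 d r (d i x) s"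

text \<open>rho_{x1...xm} = rho_{xm} o ... o rho_{x1}\<close>
fun rhoW :: "('a \<Rightarrow> 'q \<Rightarrow> 'q) \<Rightarrow> ('q \<Rightarrow> 'a \<Rightarrow> 'a) \<Rightarrow> 'q list \<Rightarrow> 'a list \<Rightarrow> 'a list" where
  "rhoW d r [] s = s"
| "rhoW d r (x # u) s = rhoW d r u (rho1 d r x s)"

fun deltaW1 :: "('a \<Rightarrow> 'q \<Rightarrow> 'q) \<Rightarrow> ('q \<Rightarrow> 'a \<Rightarrow> 'a) \<Rightarrow> 'a \<Rightarrow> 'q list \<Rightarrow> 'q list" where
  "deltaW1 d r i [] = []"
| "deltaW1 d r i (x # u) = d i x # deltaW1 d r (r x i) u"

text \<open>Connected component of u in A^n (n = length u): weak connectivity in the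
graph with edges w -> delta_i(w).  Vertices of the orbit tree are such components.\<close>

definition comp :: "('a \<Rightarrow> 'q \<Rightarrow> 'q) \<Rightarrow> ('q \<Rightarrow> 'a \<Rightarrow> 'a) \<Rightarrow> 'q list \<Rightarrow> 'q list set" where
  "comp d r u =
     (let E = {(w, deltaW1 d r i w) | w i. True} in {v. (u, v) \<in> (E \<union> E\<inverse>)\<^sup>*})"

type_synonym 'q vertex = "'q list set"
type_synonym 'q edge = "'q list set \<times> 'q list set"

definition root :: "'q vertex" where
  "root = {[]}"

text \<open>Edges of the orbit tree: (top, bottom).\<close>
definition is_edge :: "('a \<Rightarrow> 'q \<Rightarrow> 'q) \<Rightarrow> ('q \<Rightarrow> 'a \<Rightarrow> 'a) \<Rightarrow> 'q edge \<Rightarrow> bool" where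
  "is_edge d r e \<longleftrightarrow> (\<exists>u x. e = (comp d r u, comp d r (u @ [x])))"

definition vlevel :: "'q vertex \<Rightarrow> nat" where
  "vlevel C = length (SOME w. w \<in> C)"

definition elevel :: "'q edge \<Rightarrow> nat" where
  "elevel e = vlevel (fst e)"

definition label :: "'q edge \<Rightarrow> real" where
  "label e = real (card (snd e)) / real (card (fst e))"

definition liftable :: "'q edge \<Rightarrow> 'q edge \<Rightarrow> bool" where
  "liftable e f \<longleftrightarrow> (\<forall>w \<in> snd e. \<exists>s t. w = s @ t \<and> t \<in> snd f)"

definition is_path :: "('a \<Rightarrow> 'q \<Rightarrow> 'q) \<Rightarrow> ('q \<Rightarrow> 'a \<Rightarrow> 'a) \<Rightarrow> 'q edge list \<Rightarrow> bool" where
  "is_path d r p \<longleftrightarrow> (\<forall>e \<in> set p. is_edge d r e) \<and>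
     (\<forall>j. Suc j < length p \<longrightarrow> snd (p ! j) = fst (p ! Suc j))"

definition path_in ::
  "('a \<Rightarrow> 'q \<Rightarrow> 'q) \<Rightarrow> ('q \<Rightarrow> 'a \<Rightarrow> 'a) \<Rightarrow> 'q edge set \<Rightarrow> 'q edge list \<Rightarrow> bool" where
  "path_in d r S p \<longleftrightarrow> is_path d r p \<and> set p \<subseteq> S"

definition initial_path :: "('a \<Rightarrow> 'q \<Rightarrow> 'q) \<Rightarrow> ('q \<Rightarrow> 'a \<Rightarrow> 'a) \<Rightarrow> 'q edge list \<Rightarrow> bool" where
  "initial_path d r p \<longleftrightarrow> is_path d r p \<and> (p \<noteq> [] \<longrightarrow> fst (hd p) = root)"

definition self_liftable_k ::
  "('a \<Rightarrow> 'q \<Rightarrow> 'q) \<Rightarrow> ('q \<Rightarrow> 'a \<Rightarrow> 'a) \<Rightarrow> nat \<Rightarrow> 'q edge set \<Rightarrow> bool" where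
  "self_liftable_k d r k S \<longleftrightarrow>
     (\<forall>i p. path_in d r S p \<and> p \<noteq> [] \<and> elevel (hd p) = i + k \<longrightarrow>
        (\<exists>q. path_in d r S q \<and> q \<noteq> [] \<and> elevel (hd q) = i \<and> list_all2 liftable p q))"

definition self_liftable ::
  "('a \<Rightarrow> 'q \<Rightarrow> 'q) \<Rightarrow> ('q \<Rightarrow> 'a \<Rightarrow> 'a) \<Rightarrow> 'q edge set \<Rightarrow> bool" where
  "self_liftable d r S \<longleftrightarrow> (\<exists>k>0. self_liftable_k d r k S)"

definition is_branch :: "('a \<Rightarrow> 'q \<Rightarrow> 'q) \<Rightarrow> ('q \<Rightarrow> 'a \<Rightarrow> 'a) \<Rightarrow> (nat \<Rightarrow> 'q edge) \<Rightarrow> bool" where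
  "is_branch d r B \<longleftrightarrow> fst (B 0) = root \<and> (\<forall>n. is_edge d r (B n)) \<and>
     (\<forall>n. snd (B n) = fst (B (Suc n)))"

definition active :: "(nat \<Rightarrow> 'q edge) \<Rightarrow> bool" where
  "active B \<longleftrightarrow> \<not> (\<exists>N. \<forall>n\<ge>N. label (B n) = 1)"

definition legit_child ::
  "('a \<Rightarrow> 'q \<Rightarrow> 'q) \<Rightarrow> ('q \<Rightarrow> 'a \<Rightarrow> 'a) \<Rightarrow> 'q edge \<Rightarrow> 'q edge \<Rightarrow> bool" where
  "legit_child d r e f \<longleftrightarrow> is_edge d r f \<and> fst f = snd e \<and> liftable f e"

definition jungle_path ::
  "('a \<Rightarrow> 'q \<Rightarrow> 'q) \<Rightarrow> ('q \<Rightarrow> 'a \<Rightarrow> 'a) \<Rightarrow> 'q edge list \<Rightarrow> bool" where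
  "jungle_path d r e \<longleftrightarrow> initial_path d r e \<and> e \<noteq> [] \<and> self_liftable_k d r 1 (set e) \<and>
     (\<exists>f1 f2. f1 \<noteq> f2 \<and> legit_child d r (last e) f1 \<and> legit_child d r (last e) f2) \<and>
     (\<forall>f. legit_child d r (last e) f \<longrightarrow> label f = 1)"

definition descends ::
  "('a \<Rightarrow> 'q \<Rightarrow> 'q) \<Rightarrow> ('q \<Rightarrow> 'a \<Rightarrow> 'a) \<Rightarrow> 'q vertex \<Rightarrow> 'q vertex \<Rightarrow> bool" where
  "descends d r C D \<longleftrightarrow> (C, D) \<in> {e. is_edge d r e}\<^sup>*"

definition jungle_tree ::
  "('a \<Rightarrow> 'q \<Rightarrow> 'q) \<Rightarrow> ('q \<Rightarrow> 'a \<Rightarrow> 'a) \<Rightarrow> 'q edge list \<Rightarrow> 'q edge set" where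
  "jungle_tree d r e = set e \<union>
     {f. is_edge d r f \<and> descends d r (snd (last e)) (fst f) \<and> liftable f (last e)}"

definition stems :: "'q edge list \<Rightarrow> 'q list set" where
  "stems e = snd (last e)"

definition rep_path ::
  "('a \<Rightarrow> 'q \<Rightarrow> 'q) \<Rightarrow> ('q \<Rightarrow> 'a \<Rightarrow> 'a) \<Rightarrow> 'q list \<Rightarrow> 'q edge list" where
  "rep_path d r w =
     map (\<lambda>k. (comp d r (take k w), comp d r (take (Suc k) w))) [0..<length w]"

definition jword ::
  "('a \<Rightarrow> 'q \<Rightarrow> 'q) \<Rightarrow> ('q \<Rightarrow> 'a \<Rightarrow> 'a) \<Rightarrow> 'q edge list \<Rightarrow> 'q list \<Rightarrow> bool" where
  "jword d r e w \<longleftrightarrow> set (rep_path d r w) \<subseteq> jungle_tree d r e"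

definition jsim ::
  "('a \<Rightarrow> 'q \<Rightarrow> 'q) \<Rightarrow> ('q \<Rightarrow> 'a \<Rightarrow> 'a) \<Rightarrow> 'q edge list \<Rightarrow> 'q list \<Rightarrow> 'q list \<Rightarrow> bool" where
  "jsim d r e u v \<longleftrightarrow>
     (\<exists>s. jword d r e (u @ s @ v) \<and> (\<forall>t. rhoW d r (u @ s) t = t))"

definition jwedge0 ::
  "('a \<Rightarrow> 'q \<Rightarrow> 'q) \<Rightarrow> ('q \<Rightarrow> 'a \<Rightarrow> 'a) \<Rightarrow> 'q edge list \<Rightarrow> 'q list \<Rightarrow> 'q list \<Rightarrow> bool" where
  "jwedge0 d r e u v \<longleftrightarrow> u \<in> stems e \<and> v \<in> stems e \<and>
     (\<exists>s \<in> stems e. jword d r e (s @ u) \<and> jword d r e (s @ v))"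

definition jwedge ::
  "('a \<Rightarrow> 'q \<Rightarrow> 'q) \<Rightarrow> ('q \<Rightarrow> 'a \<Rightarrow> 'a) \<Rightarrow> 'q edge list \<Rightarrow> 'q list \<Rightarrow> 'q list \<Rightarrow> bool" where
  "jwedge d r e = (jwedge0 d r e)\<^sup>+\<^sup>+"

end

theory Submission
  imports Defs "HOL-Library.FuncSet"
begin


definition EE :: "('a \<Rightarrow> 'q \<Rightarrow> 'q) \<Rightarrow> ('q \<Rightarrow> 'a \<Rightarrow> 'a) \<Rightarrow> ('q list \<times> 'q list) set" where
 "EE d r = {(w, deltaW1 d r i w) | w i. True}"

lemma comp_alt: "comp d r u = {v. (u,v) \<in> (EE d r \<union> (EE d r)\<inverse>)\<^sup>*}"
  by (simp add: comp_def EE_def Let_def)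

lemma length_deltaW1[simp]: "length (deltaW1 d r i w) = length w"
  by (induction w arbitrary: i) auto

lemma length_rho1[simp]: "length (rho1 d r x s) = length s"
  by (induction s arbitrary: x) auto

lemma length_rhoW[simp]: "length (rhoW d r u s) = length s"
  by (induction u arbitrary: s) auto

lemma rhoW_Nil[simp]: "rhoW d r u [] = []"
  by (induction u) auto

lemma rhoW_append: "rhoW d r (a @ b) t = rhoW d r b (rhoW d r a t)"
  by (induction a arbitrary: t) auto

definition out where "out d r a i = hd (rhoW d r a [i])"

lemma deltaW1_append:
  "deltaW1 d r i (a @ b) = deltaW1 d r i a @ deltaW1 d r (out d r a i) b"
  by (induction a arbitrary: i) (auto simp: out_def)

lemma out_Cons: "out d r (x # z) i = out d r z (r x i)" by (simp add: out_def)
lemma rhoW_Cons_input: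
  "rhoW d r z (i # t) = out d r z i # rhoW d r (deltaW1 d r i z) t"
proof (induction z arbitrary: i t)
  case Nil then show ?case by (simp add: out_def)
next
  case (Cons x z)
  have "rhoW d r (x # z) (i # t) = rhoW d r z (r x i # rho1 d r (d i x) t)" by simp
  also have "\<dots> = out d r z (r x i) # rhoW d r (deltaW1 d r (r x i) z) (rho1 d r (d i x) t)"
    by (rule Cons.IH)
  finally show ?case by (simp add: out_Cons)
qed

lemma inj_deltaW1:
  assumes "reversible d" shows "inj (deltaW1 d r i)"
proof -
  have "deltaW1 d r i xs = deltaW1 d r i ys \<Longrightarrow> xs = ys" for xs ys
  proof (induction xs arbitrary: i ys)
    case Nil then show ?case by (cases ys) auto
  next
    case (Cons x xs)
    from Cons.prems obtain y ys' where ys: "ys = y # ys'" by (cases ys) auto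
    from Cons.prems ys have "d i x = d i y" by simp
    with assms have "x = y" unfolding reversible_def by (meson bij_def injD)
    with Cons ys show ?case by auto
  qed
  then show ?thesis by (auto intro: injI)
qed

lemma inj_rho1:
  assumes "invertible r" shows "inj (rho1 d r x)"
proof -
  have "rho1 d r x xs = rho1 d r x ys \<Longrightarrow> xs = ys" for xs ys
  proof (induction xs arbitrary: x ys)
    case Nil then show ?case by (cases ys) auto
  next
    case (Cons i xs)
    from Cons.prems obtain j ys' where ys: "ys = j # ys'" by (cases ys) auto
    from Cons.prems ys have "r x i = r x j" by simp
    with assms have "i = j" unfolding invertible_def by (meson bij_def injD)
    with Cons ys show ?case by auto
  qed
  then show ?thesis by (auto intro: injI)
qed

lemma inj_rhoW:
  assumes "invertible r" shows "inj (rhoW d r u)"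
proof (induction u)
  case Nil then show ?case by (simp add: inj_on_def)
next
  case (Cons x u)
  have e: "rhoW d r (x # u) = rhoW d r u \<circ> rho1 d r x" by (rule ext) simp
  have "inj (rhoW d r u \<circ> rho1 d r x)" using Cons inj_rho1[OF assms] by (rule inj_compose)
  then show ?case by (simp only: e)
qed

lemma surj_out:
  assumes "invertible r" shows "\<exists>i. out d r a i = j"
proof -
  have "inj (out d r a)"
  proof (rule injI)
    fix i i' assume "out d r a i = out d r a i'"
    moreover have "rhoW d r a [i] = [out d r a i]" for i
      using length_rhoW[of d r a "[i]"] unfolding out_def by (cases "rhoW d r a [i]") auto
    ultimately have "rhoW d r a [i] = rhoW d r a [i']" by metis
    then show "i = i'" using inj_rhoW[OF assms] by (auto dest: injD)
  qed
  then have "surj (out d r a)" by (simp add: finite_UNIV_inj_surj)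
  then show ?thesis by (metis surjD)
qed

lemma perm_return:
  assumes "inj_on f S" "finite S" "f ` S \<subseteq> S" "x \<in> S"
  shows "\<exists>p>0. (f ^^ p) x = x"
proof -
  have inS: "(f ^^ k) x \<in> S" for k
    by (induction k) (use assms in auto)
  have imS: "(f ^^ k) ` S \<subseteq> S" for k using assms(3) by (induction k) auto
  have injk: "inj_on (f ^^ k) S" for k
  proof (induction k)
    case 0 then show ?case by simp
  next
    case (Suc k)
    have "inj_on (f \<circ> (f ^^ k)) S"
      using comp_inj_on[OF Suc.IH inj_on_subset[OF assms(1) imS[of k]]] .
    then show ?case unfolding funpow.simps(2) .
  qed
  have "\<not> inj_on (\<lambda>k. (f ^^ k) x) {0..card S}"
  proof
    assume "inj_on (\<lambda>k. (f ^^ k) x) {0..card S}"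
    then have "card ((\<lambda>k. (f ^^ k) x) ` {0..card S}) = Suc (card S)"
      by (simp add: card_image)
    moreover have "(\<lambda>k. (f ^^ k) x) ` {0..card S} \<subseteq> S" using inS by auto
    then have "card ((\<lambda>k. (f ^^ k) x) ` {0..card S}) \<le> card S"
      using card_mono[OF assms(2)] by blast
    ultimately show False by simp
  qed
  then obtain a b where ab0: "a \<noteq> b" "(f ^^ a) x = (f ^^ b) x"
    unfolding inj_on_def by blast
  then obtain a b where ab: "a < b" "(f ^^ a) x = (f ^^ b) x"
  proof (cases "a < b")
    case True then show ?thesis using ab0 that by blast
  next
    case False then have "b < a" using ab0(1) by simp
    then show ?thesis using ab0(2) that by metis
  qed
  have "b = a + (b - a)" using ab(1) by simp
  then have "(f ^^ b) x = (f ^^ (a + (b - a))) x" by simp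
  also have "\<dots> = (f ^^ a) ((f ^^ (b - a)) x)" by (simp only: funpow_add o_apply)
  finally have "(f ^^ a) ((f ^^ (b - a)) x) = (f ^^ a) x" using ab(2) by simp
  then have "(f ^^ (b - a)) x = x"
    using inj_onD[OF injk[of a]] inS assms(4) by blast
  then show ?thesis using ab(1) by (intro exI[of _ "b - a"]) auto
qed

lemma finite_len: "finite {w :: 'q::finite list. length w = n}"
  using finite_lists_length_eq[of "UNIV :: 'q set" n] by simp

lemma EE_iter: "(y, (deltaW1 d r i ^^ k) y) \<in> (EE d r)\<^sup>*"
proof (induction k)
  case 0 then show ?case by simp
next
  case (Suc k)
  have "((deltaW1 d r i ^^ k) y, (deltaW1 d r i ^^ Suc k) y) \<in> EE d r"
    unfolding EE_def by auto
  with Suc show ?case by (meson rtrancl_into_rtrancl)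
qed

lemma step_back:
  fixes z :: "'q::finite list"
  assumes "reversible d"
  shows "(deltaW1 d r i z, z) \<in> (EE d r)\<^sup>*"
proof -
  let ?f = "deltaW1 d r i"
  have i1: "inj_on ?f {w. length w = length z}"
    using inj_deltaW1[OF assms] by (rule inj_on_subset) simp
  have i2: "?f ` {w. length w = length z} \<subseteq> {w. length w = length z}" by auto
  have "\<exists>p>0. (?f ^^ p) z = z"
    using perm_return[OF i1 finite_len i2] by simp
  then obtain p where p: "p > 0" "(?f ^^ p) z = z" by blast
  have e1: "(?f ^^ Suc (p - 1)) z = (?f ^^ (p - 1)) (?f z)" by (simp only: funpow_Suc_right o_apply)
  have "Suc (p - 1) = p" using p(1) by simp
  then have "(?f ^^ (p - 1)) (?f z) = z" using e1 p(2) by simp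
  then show ?thesis using EE_iter[where y="?f z" and d=d and r=r and i=i and k="p - 1"] by simp
qed

lemma comp_fwd:
  fixes u :: "'q::finite list"
  assumes "reversible d"
  shows "comp d r u = {v. (u,v) \<in> (EE d r)\<^sup>*}"
proof -
  have "(u,v) \<in> (EE d r)\<^sup>*" if "(u,v) \<in> (EE d r \<union> (EE d r)\<inverse>)\<^sup>*" for v
    using that
  proof (induction rule: rtrancl_induct)
    case base then show ?case by simp
  next
    case (step y z)
    from step(2) show ?case
    proof (elim UnE)
      assume "(y,z) \<in> EE d r" with step(3) show ?thesis by (rule rtrancl_into_rtrancl)
    next
      assume "(y,z) \<in> (EE d r)\<inverse>"
      then obtain i where "y = deltaW1 d r i z" unfolding EE_def by auto
      with step_back[OF assms, of r i z] have "(y,z) \<in> (EE d r)\<^sup>*" by simp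
      with step(3) show ?thesis by (rule rtrancl_trans)
    qed
  qed
  moreover have "(u,v) \<in> (EE d r \<union> (EE d r)\<inverse>)\<^sup>*" if "(u,v) \<in> (EE d r)\<^sup>*" for v
    using that by (rule rtrancl_mono[THEN subsetD, rotated]) auto
  ultimately show ?thesis unfolding comp_alt by blast
qed

lemma EE_sym:
  fixes u :: "'q::finite list"
  assumes "reversible d" "(u,v) \<in> (EE d r)\<^sup>*" shows "(v,u) \<in> (EE d r)\<^sup>*"
  using assms(2)
proof (induction rule: rtrancl_induct)
  case base then show ?case by simp
next
  case (step y z)
  from step(2) obtain i where "z = deltaW1 d r i y" unfolding EE_def by auto
  with step_back[OF assms(1), of r i y] step show ?case by (meson rtrancl_trans)
qed

lemma EE_length: "(u,v) \<in> (EE d r)\<^sup>* \<Longrightarrow> length v = length u"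
  by (induction rule: rtrancl_induct) (auto simp: EE_def)

lemma comp_self: "u \<in> comp d r u"
  by (simp add: comp_def Let_def)

lemma comp_length: "v \<in> comp d r u \<Longrightarrow> length v = length u"
proof -
  assume "v \<in> comp d r u"
  then have "(u,v) \<in> (EE d r \<union> (EE d r)\<inverse>)\<^sup>*" by (simp add: comp_alt)
  then show ?thesis
    by (induction rule: rtrancl_induct) (auto simp: EE_def)
qed

lemma comp_eq:
  fixes u :: "'q::finite list"
  assumes "reversible d" "v \<in> comp d r u" shows "comp d r v = comp d r u"
  using assms EE_sym[OF assms(1)] unfolding comp_fwd[OF assms(1)]
  by (auto intro: rtrancl_trans)

lemma comp_delta:
  fixes u :: "'q::finite list"
  shows "deltaW1 d r i u \<in> comp d r u"
  unfolding comp_alt by (auto intro!: r_into_rtrancl simp: EE_def)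

lemma comp_finite: "finite (comp d r (u :: 'q::finite list))"
  by (rule finite_subset[OF _ finite_len[of "length u"]]) (auto dest: comp_length)

lemma comp_ne: "comp d r u \<noteq> {}" using comp_self by blast

lemma split_fwd:
  fixes a :: "'q::finite list"
  assumes "(a @ b, z) \<in> (EE d r)\<^sup>*"
  shows "(a, take (length a) z) \<in> (EE d r)\<^sup>* \<and> (b, drop (length a) z) \<in> (EE d r)\<^sup>*"
  using assms
proof (induction rule: rtrancl_induct)
  case base then show ?case by simp
next
  case (step y z)
  from step(2) obtain i where z: "z = deltaW1 d r i y" unfolding EE_def by auto
  have ly: "length y = length a + length b" using step(1) EE_length by fastforce
  have "z = deltaW1 d r i (take (length a) y) @ deltaW1 d r (out d r (take (length a) y) i) (drop (length a) y)"
    using z deltaW1_append[of d r i "take (length a) y" "drop (length a) y"] by simp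
  then have t: "take (length a) z = deltaW1 d r i (take (length a) y)"
    and dd: "drop (length a) z = deltaW1 d r (out d r (take (length a) y) i) (drop (length a) y)"
    using ly by auto
  have "(take (length a) y, take (length a) z) \<in> EE d r" using t unfolding EE_def by auto
  moreover have "(drop (length a) y, drop (length a) z) \<in> EE d r" using dd unfolding EE_def by auto
  ultimately show ?case using step(3) by (meson rtrancl_into_rtrancl)
qed

lemma comp_prefix:
  fixes a :: "'q::finite list"
  assumes "reversible d" "z \<in> comp d r (a @ b)"
  shows "take (length a) z \<in> comp d r a" "drop (length a) z \<in> comp d r b"
  using split_fwd assms unfolding comp_fwd[OF assms(1)] by blast+

lemma prefix_surj:
  fixes a :: "'q::finite list"
  assumes "reversible d" "v \<in> comp d r a"
  shows "\<exists>z \<in> comp d r (a @ b). take (length a) z = v"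
proof -
  have "(a,v) \<in> (EE d r)\<^sup>*" using assms unfolding comp_fwd[OF assms(1)] by simp
  then have "\<exists>z. (a @ b, z) \<in> (EE d r)\<^sup>* \<and> take (length a) z = v"
  proof (induction rule: rtrancl_induct)
    case base then show ?case by (intro exI[of _ "a @ b"]) simp
  next
    case (step y y')
    then obtain z where z: "(a @ b, z) \<in> (EE d r)\<^sup>*" "take (length a) z = y" by blast
    obtain i where y': "y' = deltaW1 d r i y" using step(2) unfolding EE_def by auto
    have lz: "length z = length a + length b" using EE_length[OF z(1)] by simp
    have "deltaW1 d r i z = deltaW1 d r i (take (length a) z) @ deltaW1 d r (out d r (take (length a) z) i) (drop (length a) z)"
      by (metis append_take_drop_id deltaW1_append)
    then have "deltaW1 d r i z = deltaW1 d r i y @ deltaW1 d r (out d r y i) (drop (length a) z)"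
      using z(2) by simp
    then have "take (length a) (deltaW1 d r i z) = y'" using y' lz z(2) by auto
    moreover have "(a @ b, deltaW1 d r i z) \<in> (EE d r)\<^sup>*"
      using z(1) by (rule rtrancl_into_rtrancl) (auto simp: EE_def)
    ultimately show ?case by blast
  qed
  then show ?thesis unfolding comp_fwd[OF assms(1)] by blast
qed

lemma suffix_surj:
  fixes a :: "'q::finite list"
  assumes "reversible d" "invertible r" "v \<in> comp d r b"
  shows "\<exists>z \<in> comp d r (a @ b). drop (length a) z = v"
proof -
  have "(b,v) \<in> (EE d r)\<^sup>*" using assms unfolding comp_fwd[OF assms(1)] by simp
  then have "\<exists>z. (a @ b, z) \<in> (EE d r)\<^sup>* \<and> drop (length a) z = v"
  proof (induction rule: rtrancl_induct)
    case base then show ?case by (intro exI[of _ "a @ b"]) simp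
  next
    case (step y y')
    then obtain z where z: "(a @ b, z) \<in> (EE d r)\<^sup>*" "drop (length a) z = y" by blast
    obtain j where y': "y' = deltaW1 d r j y" using step(2) unfolding EE_def by auto
    obtain i where i: "out d r (take (length a) z) i = j" using surj_out[OF assms(2)] by blast
    have "deltaW1 d r i z = deltaW1 d r i (take (length a) z) @ deltaW1 d r (out d r (take (length a) z) i) (drop (length a) z)"
      by (metis append_take_drop_id deltaW1_append)
    then have "deltaW1 d r i z = deltaW1 d r i (take (length a) z) @ deltaW1 d r j y"
      using z(2) i by simp
    then have "drop (length a) (deltaW1 d r i z) = y'" using y' EE_length[OF z(1)] by auto
    moreover have "(a @ b, deltaW1 d r i z) \<in> (EE d r)\<^sup>*"
      using z(1) by (rule rtrancl_into_rtrancl) (auto simp: EE_def)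
    ultimately show ?case by blast
  qed
  then show ?thesis unfolding comp_fwd[OF assms(1)] by blast
qed




definition per :: "'q list \<Rightarrow> nat \<Rightarrow> 'q list" where
  "per w m = map (\<lambda>j. w ! (j mod length w)) [0..<m]"

lemma length_per[simp]: "length (per w m) = m" by (simp add: per_def)

lemma take_per: "k \<le> m \<Longrightarrow> take k (per w m) = per w k"
  by (simp add: per_def take_map)

lemma per_shift:
  assumes "w \<noteq> []"
  shows "per w (j * length w + m) = per w (j * length w) @ per w m"
proof (rule nth_equalityI)
  show "length (per w (j * length w + m)) = length (per w (j * length w) @ per w m)" by simp
next
  fix i assume "i < length (per w (j * length w + m))"
  then have i: "i < j * length w + m" by simp
  show "per w (j * length w + m) ! i = (per w (j * length w) @ per w m) ! i"
  proof (cases "i < j * length w")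
    case True then show ?thesis using i by (simp add: per_def nth_append)
  next
    case False
    then have "(i - j * length w) mod length w = i mod length w"
      by (metis le_add_diff_inverse mod_mult_self3 not_less)
    moreover have "i - j * length w < m" using False i by simp
    ultimately show ?thesis using False i by (simp add: per_def nth_append)
  qed
qed

lemma per_len: "w \<noteq> [] \<Longrightarrow> per w (length w) = w"
  by (rule nth_equalityI) (auto simp: per_def)

lemma per_shift1: "w \<noteq> [] \<Longrightarrow> per w (length w + m) = w @ per w m"
  using per_shift[of w 1 m] per_len[of w] by simp

lemma per_mult: "w \<noteq> [] \<Longrightarrow> per w (k * length w) = concat (replicate k w)"
proof (induction k)
  case 0 then show ?case by (simp add: per_def)
next
  case (Suc k)
  have "per w (Suc k * length w) = per w (length w + k * length w)" by (simp add: add.commute)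
  also have "\<dots> = w @ per w (k * length w)" using per_shift1[OF Suc.prems] by simp
  finally show ?case using Suc by simp
qed

lemma per_Suc: "per w (Suc m) = per w m @ [w ! (m mod length w)]"
  by (simp add: per_def)

lemma vlevel_comp: "vlevel (comp d r u) = length u"
  unfolding vlevel_def using someI[of "\<lambda>x. x \<in> comp d r u", OF comp_self] comp_length by blast

lemma comp_Nil: "comp d r [] = root"
  unfolding root_def using comp_length[of _ d r "[]"] comp_self[of "[]" d r] by auto

lemma take_deltaW1: "take k (deltaW1 d r i z) = deltaW1 d r i (take k z)"
proof (induction z arbitrary: i k)
  case Nil then show ?case by simp
next
  case (Cons x z) then show ?case by (cases k) auto
qed

lemma comp_mem_eq:
  fixes u :: "'q::finite list"
  assumes "reversible d" "v \<in> comp d r u"  "v \<in> comp d r u'" shows "comp d r u = comp d r u'"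
  using comp_eq[OF assms(1,2)] comp_eq[OF assms(1,3)] by simp

lemma prefix_inj:
  fixes a :: "'q::finite list"
  assumes "reversible d" "card (comp d r (a @ b)) = card (comp d r a)"
  shows "inj_on (take (length a)) (comp d r (a @ b))"
proof -
  have "take (length a) ` comp d r (a @ b) = comp d r a"
    using comp_prefix(1)[OF assms(1)] prefix_surj[OF assms(1), where a=a and b=b] by fastforce
  then show ?thesis using assms(2) comp_finite by (intro eq_card_imp_inj_on) auto
qed

definition BBg :: "('a \<Rightarrow> 'q \<Rightarrow> 'q) \<Rightarrow> ('q \<Rightarrow> 'a \<Rightarrow> 'a) \<Rightarrow> 'q list \<Rightarrow> nat \<Rightarrow> 'q edge" where
  "BBg d r w m = (comp d r (per w m), comp d r (per w (Suc m)))"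

context
  fixes d :: "'a::finite \<Rightarrow> 'q::finite \<Rightarrow> 'q" and r :: "'q \<Rightarrow> 'a \<Rightarrow> 'a" and w :: "'q list"
  assumes rev: "reversible d" and inv: "invertible r" and wne: "w \<noteq> []"
begin

abbreviation BB where "BB \<equiv> BBg d r w"

lemma BB_branch: "is_branch d r BB"
  unfolding is_branch_def BBg_def
proof (intro conjI allI)
  show "fst (comp d r (per w 0), comp d r (per w (Suc 0))) = root"
    by (simp add: per_def comp_Nil)
  fix n
  show "is_edge d r (comp d r (per w n), comp d r (per w (Suc n)))"
    unfolding is_edge_def per_Suc by blast
qed simp

lemma BB_edge: "is_edge d r (BB n)"
  using BB_branch unfolding is_branch_def by blast

lemma elevel_BB: "elevel (BB m) = m"
  by (simp add: elevel_def BBg_def vlevel_comp)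

lemma path_BB:
  assumes "path_in d r (range BB) pth" "pth \<noteq> []"
  shows "\<forall>j < length pth. pth ! j = BB (elevel (hd pth) + j)"
proof (intro allI impI)
  fix j assume "j < length pth"
  then show "pth ! j = BB (elevel (hd pth) + j)"
  proof (induction j)
    case 0 
    from assms obtain m where "hd pth = BB m" unfolding path_in_def
      by (metis hd_in_set rangeE subsetD)
    then show ?case using assms(2) by (simp add: hd_conv_nth elevel_BB)
  next
    case (Suc j)
    have "pth ! Suc j \<in> range BB" using assms(1) Suc.prems unfolding path_in_def
      by (meson nth_mem subsetD)
    then obtain m where m: "pth ! Suc j = BB m" by blast
    have "snd (pth ! j) = fst (pth ! Suc j)" using assms(1) Suc.prems
      unfolding path_in_def is_path_def by blast
    then have "comp d r (per w (Suc (elevel (hd pth) + j))) = comp d r (per w m)"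
      using Suc m by (simp add: BBg_def)
    then have "per w m \<in> comp d r (per w (Suc (elevel (hd pth) + j)))"
      using comp_self[of "per w m" d r] by simp
    then have "length (per w m) = Suc (elevel (hd pth) + j)"
      by (auto dest: comp_length)
    then show ?case using m by simp
  qed
qed

lemma BB_self_liftable: "self_liftable d r (range BB)"
  unfolding self_liftable_def
proof (intro exI[of _ "length w"] conjI)
  show "0 < length w" using wne by simp
  show "self_liftable_k d r (length w) (range BB)"
    unfolding self_liftable_k_def
  proof (intro allI impI)
    fix i pth
    assume a: "path_in d r (range BB) pth \<and> pth \<noteq> [] \<and> elevel (hd pth) = i + length w"
    then have pj: "\<forall>j < length pth. pth ! j = BB (i + length w + j)" using path_BB by auto
    define q where "q = map (\<lambda>j. BB (i + j)) [0..<length pth]"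
    have "path_in d r (range BB) q"
      unfolding path_in_def is_path_def
    proof (intro conjI allI impI ballI)
      fix f assume "f \<in> set q" then show "is_edge d r f" using BB_edge by (auto simp: q_def)
    next
      fix j assume "Suc j < length q"
      then show "snd (q ! j) = fst (q ! Suc j)" by (simp add: q_def BBg_def)
    next
      show "set q \<subseteq> range BB" by (auto simp: q_def)
    qed
    moreover have "q \<noteq> []" using a q_def by simp
    moreover have "elevel (hd q) = i" using a by (simp add: q_def hd_map elevel_BB)
    moreover have "list_all2 liftable pth q"
    proof (rule list_all2_all_nthI)
      show "length pth = length q" by (simp add: q_def)
      fix j assume j: "j < length pth"
      have "liftable (BB (i + length w + j)) (BB (i + j))"
        unfolding liftable_def BBg_def
      proof
        fix z assume z: "z \<in> snd (comp d r (per w (i + length w + j)), comp d r (per w (Suc (i + length w + j))))"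
        have "per w (Suc (i + length w + j)) = w @ per w (Suc (i + j))"
          using per_shift1[OF wne, of "Suc (i + j)"] by (simp add: add.commute add.left_commute)
        then have "drop (length w) z \<in> comp d r (per w (Suc (i + j)))"
          using comp_prefix(2)[OF rev] z by fastforce
        then show "\<exists>s t. z = s @ t \<and> t \<in> snd (comp d r (per w (i + j)), comp d r (per w (Suc (i + j))))"
          by (metis append_take_drop_id snd_conv)
      qed
      then show "liftable (pth ! j) (q ! j)" using pj j by (simp add: q_def)
    qed
    ultimately show "\<exists>q. path_in d r (range BB) q \<and> q \<noteq> [] \<and> elevel (hd q) = i \<and> list_all2 liftable pth q"
      by blast
  qed
qed

lemma finite_order_aux:
  assumes N: "\<forall>n\<ge>N. card (comp d r (per w (Suc n))) = card (comp d r (per w n))"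
  shows "\<exists>D>0. \<forall>t. rhoW d r (per w (D * length w)) t = t"
proof -
  let ?O = "\<lambda>m. comp d r (per w m)"
  have injm: "inj_on (take m) (?O (Suc m))" if "m \<ge> N" for m
    using prefix_inj[OF rev, where a="per w m" and b="[w ! (m mod length w)]"] N that
    by (simp add: per_Suc)
  have injN: "inj_on (take N) (?O m)" if "m \<ge> N" for m
    using that
  proof (induction m rule: dec_induct)
    case base
    show ?case by (rule inj_onI) (metis comp_length length_per take_all order_refl)
  next
    case (step m)
    show ?case
    proof (rule inj_onI)
      fix z z' assume z: "z \<in> ?O (Suc m)" "z' \<in> ?O (Suc m)" "take N z = take N z'"
      have tz: "take m z \<in> ?O m" "take m z' \<in> ?O m"
        using comp_prefix(1)[OF rev, where a="per w m" and b="[w ! (m mod length w)]"] z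
        by (simp_all add: per_Suc)
      have "take N (take m z) = take N (take m z')" using z(3) step(1) by (simp add: min_def)
      then have "take m z = take m z'" using step.IH tz by (meson inj_onD)
      then show "z = z'" using injm[OF step(1)] z(1,2) by (meson inj_onD)
    qed
  qed
  have tN: "take N z \<in> ?O N" if "z \<in> ?O m" "m \<ge> N" for z m
  proof -
    have "per w m = per w N @ drop N (per w m)"
      using take_per[OF that(2), of w] by (metis append_take_drop_id)
    then have "z \<in> comp d r (per w N @ drop N (per w m))" using that by simp
    from comp_prefix(1)[OF rev this] show ?thesis by simp
  qed
  define F where "F m = restrict (\<lambda>y. out d r (THE z. z \<in> ?O m \<and> take N z = y)) (?O N)" for m
  have the_z: "(THE z'. z' \<in> ?O m \<and> take N z' = take N z) = z" if "z \<in> ?O m" "m \<ge> N" for z m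
    using that injN[OF that(2)] by (auto intro!: the_equality dest: inj_onD)
  have key: "\<forall>z z'. z \<in> ?O m \<longrightarrow> z' \<in> ?O m' \<longrightarrow> take N z = take N z' \<longrightarrow> rhoW d r z t = rhoW d r z' t"
    if "m \<ge> N" "m' \<ge> N" "F m = F m'" for m m' t
  proof (induction t)
    case Nil then show ?case by simp
  next
    case (Cons i t)
    show ?case
    proof (intro allI impI)
      fix z z' assume z: "z \<in> ?O m" "z' \<in> ?O m'" "take N z = take N z'"
      have f1: "F m (take N z) = out d r z"
        unfolding F_def restrict_apply'[OF tN[OF z(1) that(1)]] the_z[OF z(1) that(1)] ..
      have f2: "F m' (take N z') = out d r z'"
        unfolding F_def restrict_apply'[OF tN[OF z(2) that(2)]] the_z[OF z(2) that(2)] ..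
      have o: "out d r z i = out d r z' i" using f1 f2 z(3) that(3) by metis
      have dz1: "deltaW1 d r i z \<in> ?O m"
        using comp_delta[of d r i z] comp_eq[OF rev z(1)] by simp
      have dz2: "deltaW1 d r i z' \<in> ?O m'"
        using comp_delta[of d r i z'] comp_eq[OF rev z(2)] by simp
      have "take N (deltaW1 d r i z) = take N (deltaW1 d r i z')"
        using z(3) by (simp add: take_deltaW1)
      then have "rhoW d r (deltaW1 d r i z) t = rhoW d r (deltaW1 d r i z') t"
        using Cons.IH dz1 dz2 by blast
      then show "rhoW d r z (i # t) = rhoW d r z' (i # t)"
        using o by (simp only: rhoW_Cons_input)
    qed
  qed
  let ?S = "PiE (?O N) (\<lambda>_. UNIV :: ('a \<Rightarrow> 'a) set)"
  have finS: "finite ?S" using comp_finite by (intro finite_PiE) auto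
  have FS: "F m \<in> ?S" for m by (simp add: F_def)
  let ?g = "\<lambda>k. F ((N + k) * length w)"
  have "\<not> inj_on ?g {0..card ?S}"
  proof
    assume "inj_on ?g {0..card ?S}"
    then have "card (?g ` {0..card ?S}) = Suc (card ?S)" by (simp add: card_image)
    moreover have "?g ` {0..card ?S} \<subseteq> ?S" using FS by auto
    then have "card (?g ` {0..card ?S}) \<le> card ?S" using card_mono[OF finS] by blast
    ultimately show False by simp
  qed
  then obtain a b where ab0: "a \<noteq> b" "?g a = ?g b" unfolding inj_on_def by blast
  then obtain k1 k2 where k: "k1 < k2" "?g k1 = ?g k2"
  proof (cases "a < b")
    case True then show ?thesis using ab0 that by blast
  next
    case False then have "b < a" using ab0(1) by simp
    then show ?thesis using ab0(2) that by metis
  qed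
  have p1: "N \<le> (N + k) * length w" for k
  proof -
    have "1 \<le> length w" using wne by (simp add: Suc_le_eq)
    have "N \<le> (N + k) * 1" by simp
    also have "\<dots> \<le> (N + k) * length w" using \<open>1 \<le> length w\<close> by (rule mult_le_mono2)
    finally show ?thesis .
  qed
  let ?z1 = "per w ((N + k1) * length w)" and ?z2 = "per w ((N + k2) * length w)"
  let ?X = "per w ((k2 - k1) * length w)"
  have z2: "?z2 = ?X @ ?z1"
  proof -
    have "(N + k2) * length w = (k2 - k1) * length w + (N + k1) * length w"
      using k(1) by (simp add: algebra_simps)
    then show ?thesis using per_shift[OF wne, of "k2 - k1" "(N + k1) * length w"] by simp
  qed
  have tt: "take N ?z1 = take N ?z2" using p1 by (simp add: take_per)
  have "rhoW d r ?z1 t = rhoW d r ?z2 t" for t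
    using key[OF p1 p1 k(2)] comp_self tt by blast
  then have "rhoW d r ?z1 (rhoW d r ?X t) = rhoW d r ?z1 t" for t
    using z2 by (simp add: rhoW_append)
  then have "rhoW d r ?X t = t" for t using inj_rhoW[OF inv] by (meson injD)
  then show ?thesis using k(1) by (intro exI[of _ "k2 - k1"]) auto
qed

end

lemma finite_order:
  fixes d :: "'a::finite \<Rightarrow> 'q::finite \<Rightarrow> 'q" and r :: "'q \<Rightarrow> 'a \<Rightarrow> 'a"
  assumes rev: "reversible d" and inv: "invertible r" and wne: "w \<noteq> []"
    and H: "\<not> (\<exists>B. is_branch d r B \<and> active B \<and> self_liftable d r (range B))"
  shows "\<exists>D>0. \<forall>t. rhoW d r (concat (replicate D w)) t = t"
proof -
  have "\<not> active (BBg d r w)" using H BB_branch[OF rev inv wne] BB_self_liftable[OF rev inv wne] by blast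
  then obtain N where N: "\<forall>n\<ge>N. label (BBg d r w n) = 1" unfolding active_def by blast
  have "card (comp d r (per w (Suc n))) = card (comp d r (per w n))" if "n \<ge> N" for n
  proof -
    have "card (comp d r (per w n)) > 0"
      using comp_finite[of d r "per w n"] comp_ne[of d r "per w n"] by (simp add: card_gt_0_iff)
    moreover have "label (BBg d r w n) = 1" using N that by simp
    then have "real (card (comp d r (per w (Suc n)))) / real (card (comp d r (per w n))) = 1"
      by (simp add: label_def BBg_def)
    ultimately show ?thesis by (simp add: divide_eq_1_iff)
  qed
  then obtain D where "D > 0" "\<forall>t. rhoW d r (per w (D * length w)) t = t"
    using finite_order_aux[OF rev inv wne] by blast
  then show ?thesis using per_mult[OF wne] by auto
qed




context
  fixes d :: "'a::finite \<Rightarrow> 'q::finite \<Rightarrow> 'q" and r :: "'q \<Rightarrow> 'a \<Rightarrow> 'a" and e :: "'q edge list"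
  assumes rev: "reversible d" and inv: "invertible r" and jp: "jungle_path d r e"
begin

abbreviation "n \<equiv> length e"
abbreviation "V \<equiv> snd (last e)"

lemma e_ne: "e \<noteq> []" using jp unfolding jungle_path_def by blast

lemma e_path: "is_path d r e" "fst (hd e) = root"
  using jp e_ne unfolding jungle_path_def initial_path_def by blast+

lemma e_edge: "j < n \<Longrightarrow> \<exists>a x. e ! j = (comp d r a, comp d r (a @ [x]))"
  using e_path(1) unfolding is_path_def is_edge_def by (meson nth_mem)

lemma e_cons: "Suc j < n \<Longrightarrow> snd (e ! j) = fst (e ! Suc j)"
  using e_path(1) unfolding is_path_def by blast

lemma e_struct:
  "j < n \<Longrightarrow> \<forall>w' \<in> snd (e ! j). length w' = Suc j \<and>
     (\<forall>k \<le> j. e ! k = (comp d r (take k w'), comp d r (take (Suc k) w')))"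
proof (induction j)
  case 0
  obtain a x where ax: "e ! 0 = (comp d r a, comp d r (a @ [x]))" using e_edge[OF 0] by blast
  have "fst (e ! 0) = root" using e_path(2) e_ne by (simp add: hd_conv_nth)
  then have "comp d r a = root" using ax by simp
  then have "a \<in> root" using comp_self[of a d r] by simp
  then have a0: "a = []" by (simp add: root_def)
  show ?case
  proof
    fix w' assume "w' \<in> snd (e ! 0)"
    then have w': "w' \<in> comp d r [x]" using ax a0 by simp
    then have l1: "length w' = 1" using comp_length by fastforce
    have c1: "comp d r w' = comp d r [x]" using comp_eq[OF rev w'] .
    have "e ! 0 = (comp d r (take 0 w'), comp d r (take (Suc 0) w'))"
      using ax a0 l1 c1 by (simp add: comp_Nil)
    then show "length w' = Suc 0 \<and>
       (\<forall>k\<le>0. e ! k = (comp d r (take k w'), comp d r (take (Suc k) w')))"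
      using l1 by simp
  qed
next
  case (Suc j)
  obtain a x where ax: "e ! Suc j = (comp d r a, comp d r (a @ [x]))" using e_edge[OF Suc.prems] by blast
  have ca: "comp d r a = snd (e ! j)" using e_cons[OF Suc.prems] ax by simp
  have IH: "\<forall>w' \<in> snd (e ! j). length w' = Suc j \<and>
     (\<forall>k \<le> j. e ! k = (comp d r (take k w'), comp d r (take (Suc k) w')))"
    using Suc.IH Suc.prems Suc_lessD by blast
  have "a \<in> snd (e ! j)" using comp_self[of a d r] ca by simp
  then have la: "length a = Suc j" using IH by blast
  show ?case
  proof
    fix w' assume "w' \<in> snd (e ! Suc j)"
    then have w': "w' \<in> comp d r (a @ [x])" using ax by simp
    have lw: "length w' = Suc (Suc j)" using comp_length[OF w'] la by simp
    have wa: "take (length a) w' \<in> comp d r a" using comp_prefix(1)[OF rev w'] .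
    then have w'': "take (Suc j) w' \<in> snd (e ! j)" using la ca by simp
    have IH1: "\<forall>k \<le> j. e ! k = (comp d r (take k (take (Suc j) w')), comp d r (take (Suc k) (take (Suc j) w')))"
      using IH w'' by blast
    have IH2: "e ! k = (comp d r (take k w'), comp d r (take (Suc k) w'))" if "k \<le> j" for k
    proof -
      have "take k (take (Suc j) w') = take k w'" "take (Suc k) (take (Suc j) w') = take (Suc k) w'"
        using that by (simp_all add: min_def)
      then show ?thesis using IH1 that by simp
    qed
    have c1: "comp d r (take (Suc j) w') = comp d r a" using comp_eq[OF rev wa] la by simp
    have c2: "comp d r (take (Suc (Suc j)) w') = comp d r (a @ [x])"
      using comp_eq[OF rev w'] lw by simp
    have IH3: "e ! Suc j = (comp d r (take (Suc j) w'), comp d r (take (Suc (Suc j)) w'))"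
      using ax c1 c2 by simp
    have "\<forall>k\<le>Suc j. e ! k = (comp d r (take k w'), comp d r (take (Suc k) w'))"
    proof (intro allI impI)
      fix k assume "k \<le> Suc j"
      then consider "k \<le> j" | "k = Suc j" by linarith
      then show "e ! k = (comp d r (take k w'), comp d r (take (Suc k) w'))"
        by cases (use IH2 IH3 in auto)
    qed
    then show "length w' = Suc (Suc j) \<and>
       (\<forall>k\<le>Suc j. e ! k = (comp d r (take k w'), comp d r (take (Suc k) w')))"
      using lw by simp
  qed
qed

lemma V_eq: "V = snd (e ! (n - 1))" using e_ne by (simp add: last_conv_nth)

lemma n1: "n - 1 < n" "Suc (n - 1) = n" using e_ne by auto

lemma V_len: "w' \<in> V \<Longrightarrow> length w' = n"
proof -
  assume "w' \<in> V"
  then have "w' \<in> snd (e ! (n - 1))" using V_eq by simp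
  then have "length w' = Suc (n - 1)" using e_struct[OF n1(1)] by blast
  then show ?thesis using n1(2) by simp
qed

lemma V_edges: "w' \<in> V \<Longrightarrow> k < n \<Longrightarrow> e ! k = (comp d r (take k w'), comp d r (take (Suc k) w'))"
proof -
  assume "w' \<in> V" "k < n"
  then have "w' \<in> snd (e ! (n - 1))" "k \<le> n - 1" using V_eq by auto
  then show ?thesis using e_struct[OF n1(1)] by blast
qed

lemma V_comp: "w' \<in> V \<Longrightarrow> comp d r w' = V"
proof -
  assume w: "w' \<in> V"
  have "e ! (n - 1) = (comp d r (take (n - 1) w'), comp d r (take (Suc (n - 1)) w'))"
    using V_edges[OF w n1(1)] .
  then have "snd (e ! (n - 1)) = comp d r w'" using n1(2) V_len[OF w] by simp
  then show ?thesis using V_eq by simp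
qed

lemma V_ne: "V \<noteq> {}"
proof -
  obtain a x where "e ! (n - 1) = (comp d r a, comp d r (a @ [x]))" using e_edge e_ne by fastforce
  then show ?thesis using V_eq comp_ne by auto
qed

lemma e_fst_len: "k < n \<Longrightarrow> z \<in> fst (e ! k) \<Longrightarrow> length z = k"
proof -
  assume k: "k < n" and z: "z \<in> fst (e ! k)"
  obtain v0 where v0: "v0 \<in> V" using V_ne by blast
  have "z \<in> comp d r (take k v0)" using V_edges[OF v0 k] z by simp
  then show ?thesis using comp_length V_len[OF v0] k by fastforce
qed

definition good :: "'q list \<Rightarrow> bool" where
  "good W \<longleftrightarrow> (\<forall>j. j + n \<le> length W \<longrightarrow> take n (drop j W) \<in> V)"

lemma good_win: "good W \<Longrightarrow> j + n \<le> length W \<Longrightarrow> take n (drop j W) \<in> V"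
  unfolding good_def by blast

lemma good_0: "good W \<Longrightarrow> n \<le> length W \<Longrightarrow> take n W \<in> V"
  using good_win[of W 0] by simp

lemma descends_len:
  assumes "descends d r V C" "z \<in> C" shows "n \<le> length z"
proof -
  have "(V, C) \<in> {e. is_edge d r e}\<^sup>*" using assms(1) unfolding descends_def .
  then show ?thesis using assms(2)
  proof (induction arbitrary: z rule: rtrancl_induct)
    case base then show ?case using V_len by simp
  next
    case (step C D)
    then obtain a x where ax: "(C, D) = (comp d r a, comp d r (a @ [x]))" unfolding is_edge_def by auto
    then have "n \<le> length a" using step.IH comp_self by auto
    then show ?case using step.prems ax comp_length by fastforce
  qed
qed

lemma set_rep_path:
  "set (rep_path d r W) = {(comp d r (take k W), comp d r (take (Suc k) W)) | k. k < length W}"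
  unfolding rep_path_def by auto

lemma jword_good:
  assumes "n \<le> length W" "jword d r e W" shows "good W"
  unfolding good_def
proof (intro allI impI)
  fix j assume j: "j + n \<le> length W"
  let ?k = "j + n - 1"
  have n1': "n \<ge> 1" using e_ne by (simp add: Suc_leI)
  let ?f = "(comp d r (take ?k W), comp d r (take (Suc ?k) W))"
  have kl: "?k < length W" using j n1' by linarith
  have "?f \<in> set (rep_path d r W)" unfolding set_rep_path using kl by blast
  then have fin: "?f \<in> jungle_tree d r e" using assms(2) unfolding jword_def by blast
  show "take n (drop j W) \<in> V"
  proof (cases "?f \<in> set e")
    case True
    then obtain m where m: "m < n" "e ! m = ?f" by (metis in_set_conv_nth)
    have "take ?k W \<in> fst (e ! m)" using m comp_self by simp
    then have "length (take ?k W) = m" using e_fst_len m(1) by blast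
    then have km: "m = ?k" using j n1' by simp
    then have "j = 0" using m(1) n1' by simp
    have sk: "Suc ?k = n" using \<open>j = 0\<close> n1' by simp
    have "take n W \<in> snd (e ! m)" using m(2) comp_self[of "take n W" d r] by (simp only: sk snd_conv)
    then show ?thesis using km \<open>j = 0\<close> V_eq by simp
  next
    case False
    then have low: "descends d r V (comp d r (take ?k W))" "liftable ?f (last e)"
      using fin unfolding jungle_tree_def by auto
    have "n \<le> ?k" using descends_len[OF low(1) comp_self] j by simp
    have "take (Suc ?k) W \<in> snd ?f" using comp_self by simp
    then obtain s t where st: "take (Suc ?k) W = s @ t" "t \<in> V"
      using low(2) unfolding liftable_def by blast
    have "length t = n" using V_len st(2) .
    have "Suc ?k = j + n" using n1' by simp
    then have "take (j + n) W = s @ t" using st by simp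
    moreover have "length (take (j + n) W) = j + n" using j by simp
    ultimately have "length s = j" using \<open>length t = n\<close> by simp
    then have "drop j (take (j + n) W) = t" using \<open>take (j + n) W = s @ t\<close> by simp
    then show ?thesis using st(2) by (simp add: take_drop add.commute)
  qed
qed

lemma descends_prefix:
  assumes "good W" "n \<le> m" "m \<le> length W"
  shows "descends d r V (comp d r (take m W))"
  using assms(2,3)
proof (induction m rule: dec_induct)
  case base
  have "take n W \<in> V" using good_0[OF assms(1)] base by simp
  then show ?case using V_comp by (simp add: descends_def)
next
  case (step m)
  have "is_edge d r (comp d r (take m W), comp d r (take (Suc m) W))"
    unfolding is_edge_def using step.prems by (metis Suc_le_lessD take_Suc_conv_app_nth)
  then show ?case using step unfolding descends_def by (simp add: rtrancl_into_rtrancl)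
qed

lemma good_jword:
  assumes "n \<le> length W" "good W" shows "jword d r e W"
  unfolding jword_def set_rep_path
proof clarify
  fix k assume k: "k < length W"
  let ?f = "(comp d r (take k W), comp d r (take (Suc k) W))"
  have w0: "take n W \<in> V" using good_0 assms by blast
  show "?f \<in> jungle_tree d r e"
  proof (cases "k < n")
    case True
    have "e ! k = ?f" using V_edges[OF w0 True] True by (simp add: min_def)
    moreover have "e ! k \<in> set e" using True by (rule nth_mem)
    ultimately show ?thesis unfolding jungle_tree_def by simp
  next
    case False
    have "take (Suc k) W = take k W @ [W ! k]" using k by (rule take_Suc_conv_app_nth)
    then have ed: "is_edge d r ?f"
      unfolding is_edge_def by auto
    have ds: "descends d r V (comp d r (take k W))"
      using descends_prefix[OF assms(2)] False k by simp
    have "liftable ?f (last e)"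
      unfolding liftable_def
    proof
      fix z assume z: "z \<in> snd ?f"
      let ?j = "Suc k - n"
      have win: "take n (drop ?j W) \<in> V" using good_win[OF assms(2)] False k by simp
      have sk: "Suc k = ?j + n" using False by simp
      have "take (Suc k) W = take (?j + n) W" using sk by (rule arg_cong[where f="\<lambda>m. take m W"])
      also have "\<dots> = take ?j W @ take n (drop ?j W)" by (rule take_add)
      finally have "take (Suc k) W = take ?j W @ take n (drop ?j W)" .
      moreover have "length (take ?j W) = ?j" using k False by simp
      ultimately have "drop ?j z \<in> comp d r (take n (drop ?j W))"
        using comp_prefix(2)[OF rev, where z=z and a="take ?j W" and b="take n (drop ?j W)"] z by simp
      then have "drop ?j z \<in> V" using V_comp[OF win] by simp
      moreover have "z = take ?j z @ drop ?j z" by simp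
      ultimately show "\<exists>s t. z = s @ t \<and> t \<in> snd (last e)" by blast
    qed
    then show ?thesis unfolding jungle_tree_def using ed ds by simp
  qed
qed

lemma jword_iff: "n \<le> length W \<Longrightarrow> jword d r e W \<longleftrightarrow> good W"
  using jword_good good_jword by blast

end



context
  fixes d :: "'a::finite \<Rightarrow> 'q::finite \<Rightarrow> 'q" and r :: "'q \<Rightarrow> 'a \<Rightarrow> 'a" and e :: "'q edge list"
  assumes rev: "reversible d" and inv: "invertible r" and jp: "jungle_path d r e"
begin

abbreviation "N \<equiv> length e"
abbreviation "VV \<equiv> snd (last e)"
abbreviation "gd \<equiv> good e"

lemma gdef: "gd W \<longleftrightarrow> (\<forall>j. j + N \<le> length W \<longrightarrow> take N (drop j W) \<in> VV)"
  using good_def[OF rev inv jp] .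
lemma VL: "w' \<in> VV \<Longrightarrow> length w' = N" using V_len[OF rev inv jp] .
lemma VC: "w' \<in> VV \<Longrightarrow> comp d r w' = VV" using V_comp[OF rev inv jp] .
lemma jwi: "N \<le> length W \<Longrightarrow> jword d r e W \<longleftrightarrow> gd W" using jword_iff[OF rev inv jp] .
lemma Npos: "N \<ge> 1" using e_ne[OF rev inv jp] by (simp add: Suc_leI)

lemma gwin: "gd W \<Longrightarrow> j + N \<le> length W \<Longrightarrow> take N (drop j W) \<in> VV"
  using gdef by blast

lemma good_take: "gd W \<Longrightarrow> gd (take m W)"
  unfolding gdef
proof (intro allI impI)
  fix j assume g: "\<forall>j. j + N \<le> length W \<longrightarrow> take N (drop j W) \<in> VV" and j: "j + N \<le> length (take m W)"
  have jm: "j + N \<le> m" "j + N \<le> length W" using j by auto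
  have "take N (drop j (take m W)) = take N (take (m - j) (drop j W))" by (simp only: drop_take)
  also have "\<dots> = take N (drop j W)" using jm by (simp add: min_def)
  finally have "take N (drop j (take m W)) = take N (drop j W)" .
  then show "take N (drop j (take m W)) \<in> VV" using g jm by simp
qed

lemma good_drop: "gd W \<Longrightarrow> gd (drop m W)"
  unfolding gdef
proof (intro allI impI)
  fix j assume g: "\<forall>j. j + N \<le> length W \<longrightarrow> take N (drop j W) \<in> VV" and j: "j + N \<le> length (drop m W)"
  have "drop j (drop m W) = drop (j + m) W" by (simp add: add.commute)
  moreover have "j + m + N \<le> length W" using j Npos by (cases "m \<le> length W") auto
  ultimately show "take N (drop j (drop m W)) \<in> VV" using g by (simp add: add.commute add.left_commute)
qed

definition walkw :: "'q list \<Rightarrow> 'q list \<Rightarrow> 'q list \<Rightarrow> bool" where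
  "walkw x T y \<longleftrightarrow> y \<in> VV \<and> gd (T @ y) \<and> take N (T @ y) = x"

lemma walk_refl: "x \<in> VV \<Longrightarrow> walkw x [] x"
  unfolding walkw_def gdef
proof (intro conjI allI impI)
  assume x: "x \<in> VV"
  fix j assume "j + N \<le> length ([] @ x)"
  then have "j = 0" using VL[OF x] by simp
  then show "take N (drop j ([] @ x)) \<in> VV" using x VL[OF x] by simp
qed (use VL in auto)

lemma take_agree: "take N W2 = y \<Longrightarrow> m \<le> N \<Longrightarrow> take m W2 = take m y"
  by (metis min.absorb1 take_take)

lemma walk_trans:
  assumes "walkw x T y" "walkw y T' z" shows "walkw x (T @ T') z"
proof -
  have y: "y \<in> VV" "gd (T @ y)" "take N (T @ y) = x" using assms(1) unfolding walkw_def by auto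
  have z: "z \<in> VV" "gd (T' @ z)" "take N (T' @ z) = y" using assms(2) unfolding walkw_def by auto
  have ly: "length y = N" using VL[OF y(1)] .
  let ?W2 = "T' @ z"
  have lW2: "N \<le> length ?W2" using VL[OF z(1)] by simp
  have g: "gd (T @ ?W2)"
    unfolding gdef
  proof (intro allI impI)
    fix j assume j: "j + N \<le> length (T @ ?W2)"
    show "take N (drop j (T @ ?W2)) \<in> VV"
    proof (cases "length T \<le> j")
      case True
      then have dd: "drop j (T @ ?W2) = drop (j - length T) ?W2" by simp
      have "j - length T + N \<le> length ?W2" using j True by simp
      then have "take N (drop (j - length T) ?W2) \<in> VV" by (rule gwin[OF z(2)])
      then show ?thesis by (simp only: dd)
    next
      case False
      have e1: "take N (drop j (T @ ?W2)) = take N (drop j T) @ take (N - (length T - j)) ?W2"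
        using False by simp
      have e2: "take N (drop j (T @ y)) = take N (drop j T) @ take (N - (length T - j)) y"
        using False by simp
      have "take (N - (length T - j)) ?W2 = take (N - (length T - j)) y"
        using take_agree[OF z(3), of "N - (length T - j)"] by (simp del: take_append)
      then have "take N (drop j (T @ ?W2)) = take N (drop j (T @ y))" using e1 e2 by simp
      moreover have "j + N \<le> length (T @ y)" using False ly by simp
      ultimately show ?thesis using gwin[OF y(2)] by simp
    qed
  qed
  have t: "take N (T @ ?W2) = x"
  proof -
    have "take N (T @ ?W2) = take N T @ take (N - length T) ?W2" by simp
    also have "\<dots> = take N T @ take (N - length T) y"
      using take_agree[OF z(3), of "N - length T"] by (simp del: take_append)
    also have "\<dots> = take N (T @ y)" by simp
    finally show ?thesis using y(3) by simp
  qed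
  show ?thesis unfolding walkw_def using z(1) g t by simp
qed

lemma walk_step:
  assumes "gd z" "length z = Suc N" shows "walkw (take N z) [hd z] (drop 1 z)"
proof -
  have "z \<noteq> []" using assms(2) by auto
  then have zz: "[hd z] @ drop 1 z = z" by (cases z) auto
  have "drop 1 z \<in> VV"
  proof -
    have "take N (drop 1 z) \<in> VV" using gwin[OF assms(1), of 1] assms(2) by simp
    moreover have "take N (drop 1 z) = drop 1 z" using assms(2) by simp
    ultimately show ?thesis by simp
  qed
  then show ?thesis unfolding walkw_def using zz assms(1) by simp
qed


lemma VV_fin: "finite VV"
proof -
  obtain v where "v \<in> VV" using V_ne[OF rev inv jp] by blast
  then show ?thesis using VC comp_finite by metis
qed

lemma walk_edge_rev:
  assumes gz: "gd z" and lz: "length z = Suc N"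
  shows "\<exists>T. walkw (drop 1 z) T (take N z)"
proof -
  let ?a = "take N z" and ?D = "comp d r z"
  have aV: "?a \<in> VV" using gwin[OF gz, of 0] lz by simp
  have b1V: "drop 1 z \<in> VV"
  proof -
    have "take N (drop 1 z) \<in> VV" using gwin[OF gz, of 1] lz by simp
    then show ?thesis using lz by simp
  qed
  have za: "z = ?a @ drop N z" by simp
  have z1: "z = take 1 z @ drop 1 z" by simp
  have ldN: "drop N z = [z ! N]" using lz Cons_nth_drop_Suc[of N z] by simp
  have Dsub1: "drop 1 w \<in> VV" if "w \<in> ?D" for w
  proof -
    have "w \<in> comp d r (take 1 z @ drop 1 z)" using that by simp
    from comp_prefix(2)[OF rev this] have "drop 1 w \<in> comp d r (drop 1 z)" using lz by simp
    then show ?thesis using VC[OF b1V] by simp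
  qed
  have legit: "legit_child d r (last e) (VV, ?D)"
    unfolding legit_child_def
  proof (intro conjI)
    have "(VV, ?D) = (comp d r ?a, comp d r (?a @ [z ! N]))"
      using VC[OF aV] za ldN by simp
    then show "is_edge d r (VV, ?D)" unfolding is_edge_def by blast
    show "fst (VV, ?D) = snd (last e)" by simp
    show "liftable (VV, ?D) (last e)"
      unfolding liftable_def
    proof
      fix w assume "w \<in> snd (VV, ?D)"
      then have "drop 1 w \<in> VV" using Dsub1 by simp
      moreover have "w = take 1 w @ drop 1 w" by simp
      ultimately show "\<exists>s t. w = s @ t \<and> t \<in> snd (last e)" by blast
    qed
  qed
  then have "label (VV, ?D) = 1" using jp unfolding jungle_path_def by blast
  moreover have "card VV > 0" using VV_fin aV by (auto simp: card_gt_0_iff)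
  ultimately have cD: "card ?D = card VV" by (simp add: label_def divide_eq_1_iff)
  have injT: "inj_on (take N) ?D"
  proof -
    have "card (comp d r (?a @ drop N z)) = card (comp d r ?a)" using cD VC[OF aV] by simp
    from prefix_inj[OF rev this] show ?thesis using lz by simp
  qed
  have imT: "take N ` ?D = VV"
  proof
    show "take N ` ?D \<subseteq> VV"
    proof
      fix v assume "v \<in> take N ` ?D"
      then obtain w where w: "w \<in> ?D" "v = take N w" by blast
      have "w \<in> comp d r (?a @ drop N z)" using w(1) by simp
      from comp_prefix(1)[OF rev this] show "v \<in> VV" using w(2) VC[OF aV] lz by simp
    qed
    show "VV \<subseteq> take N ` ?D"
    proof
      fix v assume "v \<in> VV"
      then have "v \<in> comp d r ?a" using VC[OF aV] by simp
      from prefix_surj[OF rev this, of "drop N z"] obtain w where "w \<in> ?D" "take N w = v"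
        using lz by auto
      then show "v \<in> take N ` ?D" by blast
    qed
  qed
  have im1: "drop 1 ` ?D = VV"
  proof
    show "drop 1 ` ?D \<subseteq> VV" using Dsub1 by blast
    show "VV \<subseteq> drop 1 ` ?D"
    proof
      fix v assume "v \<in> VV"
      then have "v \<in> comp d r (drop 1 z)" using VC[OF b1V] by simp
      from suffix_surj[OF rev inv this, of "take 1 z"] obtain w where "w \<in> comp d r (take 1 z @ drop 1 z)" "drop 1 w = v"
        using lz by auto
      then show "v \<in> drop 1 ` ?D" by auto
    qed
  qed
  have inj1: "inj_on (drop 1) ?D"
    by (rule eq_card_imp_inj_on[OF comp_finite]) (simp only: im1 cD)
  define sel where "sel b = (THE w. w \<in> ?D \<and> take N w = b)" for b
  have sel: "sel b \<in> ?D \<and> take N (sel b) = b" if "b \<in> VV" for b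
  proof -
    have "\<exists>!w. w \<in> ?D \<and> take N w = b"
    proof -
      have "b \<in> take N ` ?D" using imT that by simp
      then obtain w where "b = take N w" "w \<in> ?D" by (rule imageE)
      then have "w \<in> ?D" "take N w = b" by simp_all
      moreover have "w' = w" if "w' \<in> ?D" "take N w' = b" for w'
        using inj_onD[OF injT, of w' w] \<open>w \<in> ?D\<close> \<open>take N w = b\<close> that by simp
      ultimately show ?thesis by blast
    qed
    then show ?thesis unfolding sel_def by (rule theI')
  qed
  define pi where "pi b = drop 1 (sel b)" for b
  have pi_in: "pi b \<in> VV" if "b \<in> VV" for b
  proof -
    have "sel b \<in> ?D" using sel[OF that] by blast
    then show ?thesis unfolding pi_def by (rule Dsub1)
  qed
  have pi_inj: "inj_on pi VV"
  proof (rule inj_onI)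
    fix b b' assume bb: "b \<in> VV" "b' \<in> VV" "pi b = pi b'"
    from bb(3) have "drop 1 (sel b) = drop 1 (sel b')" unfolding pi_def .
    moreover have "sel b \<in> ?D" "sel b' \<in> ?D" using sel[OF bb(1)] sel[OF bb(2)] by blast+
    ultimately have "sel b = sel b'" by (rule inj_onD[OF inj1])
    then have "take N (sel b) = take N (sel b')" by simp
    then show "b = b'" using sel[OF bb(1)] sel[OF bb(2)] by simp
  qed
  have sel_gd: "gd (sel b)" if "b \<in> VV" for b
    unfolding gdef
  proof (intro allI impI)
    fix j assume j: "j + N \<le> length (sel b)"
    have "sel b \<in> ?D" using sel[OF that] by blast
    then have "length (sel b) = length z" by (rule comp_length)
    then have ls: "length (sel b) = Suc N" using lz by simp
    then have "j = 0 \<or> j = 1" using j by auto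
    then show "take N (drop j (sel b)) \<in> VV"
    proof
      assume "j = 0" then show ?thesis using sel[OF that] that by simp
    next
      assume "j = 1" then show ?thesis using pi_in[OF that] ls unfolding pi_def by simp
    qed
  qed
  have step: "walkw b [hd (sel b)] (pi b)" if "b \<in> VV" for b
  proof -
    have "sel b \<in> ?D" using sel[OF that] by blast
    then have "length (sel b) = length z" by (rule comp_length)
    then have ls: "length (sel b) = Suc N" using lz by simp
    from walk_step[OF sel_gd[OF that] ls] show ?thesis using sel[OF that] unfolding pi_def by simp
  qed
  have iter: "\<exists>T. walkw b T ((pi ^^ k) b)" if "b \<in> VV" for b k
  proof (induction k)
    case 0 then show ?case using walk_refl[OF that] by auto
  next
    case (Suc k)
    then obtain T where T: "walkw b T ((pi ^^ k) b)" by blast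
    have "(pi ^^ k) b \<in> VV"
    proof (induction k)
      case 0 then show ?case using that by simp
    next
      case (Suc k) then show ?case using pi_in by simp
    qed
    from walk_trans[OF T step[OF this]] show ?case by auto
  qed
  have "pi ` VV \<subseteq> VV" using pi_in by blast
  from perm_return[OF pi_inj VV_fin this aV] obtain p where p: "p > 0" "(pi ^^ p) ?a = ?a" by blast
  have "(pi ^^ Suc (p - 1)) ?a = (pi ^^ (p - 1)) (pi ?a)" by (simp only: funpow_Suc_right o_apply)
  moreover have "Suc (p - 1) = p" using p(1) by simp
  ultimately have pa: "(pi ^^ (p - 1)) (pi ?a) = ?a" using p(2) by simp
  have "sel ?a = z"
  proof -
    have "z \<in> ?D" by (rule comp_self)
    then show ?thesis using sel[OF aV] inj_onD[OF injT, of "sel ?a" z] by simp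
  qed
  then have "pi ?a = drop 1 z" unfolding pi_def by simp
  then show ?thesis using iter[OF pi_in[OF aV], of "p - 1"] pa by simp
qed

lemma walk_rev: "walkw x T y \<Longrightarrow> \<exists>T'. walkw y T' x"
proof (induction T arbitrary: y rule: rev_induct)
  case Nil
  then have "y \<in> VV" "take N y = x" unfolding walkw_def by auto
  then have "x = y" using VL by simp
  then show ?case using walk_refl \<open>y \<in> VV\<close> by blast
next
  case (snoc c T0)
  let ?W = "(T0 @ [c]) @ y"
  have w: "y \<in> VV" "gd ?W" "take N ?W = x" using snoc.prems unfolding walkw_def by auto
  have ly: "length y = N" using VL[OF w(1)] .
  let ?y0 = "take N (c # y)"
  have dW: "drop (length T0) ?W = c # y" by simp
  have y0V: "?y0 \<in> VV" using gwin[OF w(2), of "length T0"] ly by simp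
  have tW: "take (length T0 + N) ?W = T0 @ ?y0" by simp
  have "gd (T0 @ ?y0)" using good_take[OF w(2), of "length T0 + N"] tW by simp
  moreover have "take N (T0 @ ?y0) = x"
  proof -
    have "take N (take (length T0 + N) ?W) = take N ?W" by (simp add: min_def)
    then show ?thesis using tW w(3) by simp
  qed
  ultimately have "walkw x T0 ?y0" unfolding walkw_def using y0V by simp
  then obtain T1 where T1: "walkw ?y0 T1 x" using snoc.IH by blast
  have gcy: "gd (c # y)" using good_drop[OF w(2), of "length T0"] dW by simp
  obtain T2 where "walkw (drop 1 (c # y)) T2 (take N (c # y))"
    using walk_edge_rev[OF gcy] ly by auto
  then have "walkw y T2 ?y0" by simp
  from walk_trans[OF this T1] show ?case by blast
qed

lemma walk_pow:
  assumes "walkw u L u" "walkw u L v"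
  shows "walkw u (concat (replicate (Suc k) L)) v"
proof (induction k)
  case 0 then show ?case using assms(2) by simp
next
  case (Suc k)
  from walk_trans[OF assms(1) Suc] show ?case by simp
qed

lemma walk_jsim:
  assumes "walkw u X v" "N \<le> length X" "\<forall>t. rhoW d r X t = t"
  shows "jsim d r e u v"
proof -
  have w: "v \<in> VV" "gd (X @ v)" "take N (X @ v) = u" using assms(1) unfolding walkw_def by auto
  have "take N X = u" using w(3) assms(2) by simp
  then have X: "X = u @ drop N X" by (metis append_take_drop_id)
  have "jword d r e (X @ v)" using jwi w(2) assms(2) by simp
  then have "jword d r e (u @ drop N X @ v)" using X by (metis append.assoc)
  moreover have "\<forall>t. rhoW d r (u @ drop N X) t = t" using assms(3) X by metis
  ultimately show ?thesis unfolding jsim_def by blast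
qed

lemma wedge0_sim:
  assumes H: "\<not> (\<exists>B. is_branch d r B \<and> active B \<and> self_liftable d r (range B))"
    and w0: "jwedge0 d r e u v"
  shows "jsim d r e u v"
proof -
  obtain s where s: "u \<in> VV" "v \<in> VV" "s \<in> VV" "jword d r e (s @ u)" "jword d r e (s @ v)"
    using w0 unfolding jwedge0_def stems_def by blast
  have ls: "length s = N" using VL s(3) by simp
  have "walkw s s u" unfolding walkw_def using s jwi ls by simp
  then obtain T1 where T1: "walkw u T1 s" using walk_rev by blast
  have sv: "walkw s s v" unfolding walkw_def using s jwi ls by simp
  have su: "walkw s s u" unfolding walkw_def using s jwi ls by simp
  let ?L = "T1 @ s"
  have loop: "walkw u ?L u" using walk_trans[OF T1 su] .
  have uv: "walkw u ?L v" using walk_trans[OF T1 sv] .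
  have "?L \<noteq> []" using ls Npos by auto
  from finite_order[OF rev inv this H] obtain D where D: "D > 0" "\<forall>t. rhoW d r (concat (replicate D ?L)) t = t"
    by blast
  have DD: "Suc (D - 1) = D" using D(1) by simp
  have "walkw u (concat (replicate D ?L)) v" using walk_pow[OF loop uv, of "D - 1"] DD by simp
  moreover have "N \<le> length (concat (replicate D ?L))"
  proof -
    have "concat (replicate D ?L) = ?L @ concat (replicate (D - 1) ?L)" using DD
      by (metis concat.simps(2) replicate_Suc)
    then show ?thesis using ls by simp
  qed
  ultimately show ?thesis using walk_jsim D(2) by blast
qed

lemma jsim_trans:
  assumes "x \<in> VV" "y \<in> VV" "z \<in> VV" "jsim d r e x y" "jsim d r e y z"
  shows "jsim d r e x z"
proof -
  obtain s1 where s1: "jword d r e (x @ s1 @ y)" "\<forall>t. rhoW d r (x @ s1) t = t"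
    using assms(4) unfolding jsim_def by blast
  obtain s2 where s2: "jword d r e (y @ s2 @ z)" "\<forall>t. rhoW d r (y @ s2) t = t"
    using assms(5) unfolding jsim_def by blast
  have lx: "length x = N" "length y = N" "length z = N" using VL assms(1-3) by auto
  have "walkw x (x @ s1) y" unfolding walkw_def using s1(1) assms(2) lx jwi[of "x @ s1 @ y"] by simp
  moreover have "walkw y (y @ s2) z" unfolding walkw_def using s2(1) assms(3) lx jwi[of "y @ s2 @ z"] by simp
  ultimately have w: "walkw x ((x @ s1) @ (y @ s2)) z" by (rule walk_trans)
  have "\<forall>t. rhoW d r ((x @ s1) @ (y @ s2)) t = t" using s1(2) s2(2) by (simp add: rhoW_append)
  moreover have "N \<le> length ((x @ s1) @ (y @ s2))" using lx by simp
  ultimately show ?thesis using walk_jsim w by blast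
qed

lemma main:
  assumes H: "\<not> (\<exists>B. is_branch d r B \<and> active B \<and> self_liftable d r (range B))"
    and u: "u \<in> VV" and w: "jwedge d r e u v"
  shows "jsim d r e u v"
proof -
  have "(jwedge0 d r e)\<^sup>+\<^sup>+ u v" using w unfolding jwedge_def .
  then show ?thesis
  proof (induction rule: tranclp_induct)
    case (base y) then show ?case using wedge0_sim[OF H] by blast
  next
    case (step y z)
    have "y \<in> VV" "z \<in> VV" using step(2) unfolding jwedge0_def stems_def by auto
    moreover have "jsim d r e y z" using wedge0_sim[OF H step(2)] .
    ultimately show ?case using jsim_trans u step(3) by blast
  qed
qed

end


theorem lemma5p15:
  fixes d :: "'a::finite \<Rightarrow> 'q::finite \<Rightarrow> 'q"
    and r :: "'q \<Rightarrow> 'a \<Rightarrow> 'a"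
    and e :: "'q edge list"
    and u v :: "'q list"
  assumes "aut_connected d"
    and "bireversible d r"
    and "\<not> (\<exists>B. is_branch d r B \<and> active B \<and> self_liftable d r (range B))"
    and "jungle_path d r e"
    and "u \<in> stems e" and "v \<in> stems e"
    and "jwedge d r e u v"
  shows "jsim d r e u v"
proof -
  have rev: "reversible d" and inv: "invertible r" using assms(2) unfolding bireversible_def by auto
  have u: "u \<in> snd (last e)" using assms(5) unfolding stems_def .
  show ?thesis using main[OF rev inv assms(4) assms(3) u assms(7)] .
qed

end
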